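(* Let $A$ be a nondegenerate finite quadratic form, and let $Q$ be a fixed finite orthogonal direct sum of copies of $u(2)$ and $v(2)$ such that there exists an embedding $Q\hookrightarrow A$. Then the orthogonal complement $Q^\perp\subset A$ is determined uniquely up to isometry by $A$ and $Q$; that is, for any two embeddings $Q\hookrightarrow A$, the orthogonal complements of the images are isometric finite quadratic forms.
   Context: A finite quadratic form is a finite abelian group $A$ with a quadratic form $q:A\to\mathbb Q/2\mathbb Z$ whose associated bilinear form $b:A\times A\to\mathbb Q/\mathbb Z$ is symmetric bilinear with $q(x+y)=q(x)+q(y)+2b(x,y)$; it is nondegenerate if $b$ is. An embedding is an injective homomorphism preserving $q$, and $Q^\perp$ is the orthogonal complement with respect to $b$. The forms $u(2)$ and $v(2)$ are on $(\mathbb Z/2\mathbb Z)^2$ with Gram matrices $\begin{pmatrix}0&1/2\\1/2&0\end{pmatrix}$ and $\begin{pmatrix}1&1/2\\1/2&1\end{pmatrix}$ respectively, diagonal entries (values of $q$) in $\mathbb Q/2\mathbb Z$ and off-diagonal entries in $\mathbb Q/\mathbb Z$ (they are the discriminant forms of even 2-adic lattices $2^{+2}_{II}$ and $2^{-2}_{II}$, e.g. of $U(2)$ resp. $D_4$). *)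

theory Defs
  imports "HOL-Algebra.Algebra"
begin

text \<open>Finite abelian groups are HOL-Algebra commutative groups (written multiplicatively,
  the group law standing for the addition of the abelian group).  A value of Q/2Z (resp. Q/Z)
  is represented by a rational number, read modulo 2 (resp. modulo 1).\<close>

definition cong2 :: "rat \<Rightarrow> rat \<Rightarrow> bool" where
  "cong2 x y \<longleftrightarrow> (x - y) / 2 \<in> \<int>"

definition cong1 :: "rat \<Rightarrow> rat \<Rightarrow> bool" where
  "cong1 x y \<longleftrightarrow> x - y \<in> \<int>"

definition bform :: "('a, 'b) monoid_scheme \<Rightarrow> ('a \<Rightarrow> rat) \<Rightarrow> 'a \<Rightarrow> 'a \<Rightarrow> rat" where
  "bform G q x y = (q (x \<otimes>\<^bsub>G\<^esub> y) - q x - q y) / 2"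

definition finite_quadratic_form :: "('a, 'b) monoid_scheme \<Rightarrow> ('a \<Rightarrow> rat) \<Rightarrow> bool" where
  "finite_quadratic_form G q \<longleftrightarrow>
     comm_group G \<and> finite (carrier G) \<and>
     (\<forall>x\<in>carrier G. \<forall>n::int. cong2 (q (x [^]\<^bsub>G\<^esub> n)) (of_int (n^2) * q x)) \<and>
     (\<forall>x\<in>carrier G. \<forall>x'\<in>carrier G. \<forall>y\<in>carrier G.
        cong1 (bform G q (x \<otimes>\<^bsub>G\<^esub> x') y) (bform G q x y + bform G q x' y))"

definition nondegenerate :: "('a, 'b) monoid_scheme \<Rightarrow> ('a \<Rightarrow> rat) \<Rightarrow> bool" where
  "nondegenerate G q \<longleftrightarrow>
     (\<forall>x\<in>carrier G. (\<forall>y\<in>carrier G. cong1 (bform G q x y) 0) \<longrightarrow> x = \<one>\<^bsub>G\<^esub>)"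

definition orth_compl :: "('a, 'b) monoid_scheme \<Rightarrow> ('a \<Rightarrow> rat) \<Rightarrow> 'a set \<Rightarrow> 'a set" where
  "orth_compl G q S = {x \<in> carrier G. \<forall>y\<in>S. cong1 (bform G q x y) 0}"

definition qf_embedding ::
  "('c, 'd) monoid_scheme \<Rightarrow> ('c \<Rightarrow> rat) \<Rightarrow> ('a, 'b) monoid_scheme \<Rightarrow> ('a \<Rightarrow> rat) \<Rightarrow> ('c \<Rightarrow> 'a) \<Rightarrow> bool" where
  "qf_embedding H p G q f \<longleftrightarrow>
     f \<in> hom H G \<and> inj_on f (carrier H) \<and> (\<forall>x\<in>carrier H. cong2 (q (f x)) (p x))"

definition qf_isometric ::
  "('c, 'd) monoid_scheme \<Rightarrow> ('c \<Rightarrow> rat) \<Rightarrow> ('a, 'b) monoid_scheme \<Rightarrow> ('a \<Rightarrow> rat) \<Rightarrow> bool" where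
  "qf_isometric H p G q \<longleftrightarrow>
     (\<exists>f. f \<in> hom H G \<and> bij_betw f (carrier H) (carrier G) \<and> (\<forall>x\<in>carrier H. cong2 (q (f x)) (p x)))"

text \<open>The orthogonal direct sum of m copies of u(2) followed by n copies of v(2), on
  (Z/2Z)^(2(m+n)); an element is a 0/1-valued function f on nat supported on {0..<2(m+n)};
  coordinates 2i, 2i+1 span the i-th summand.\<close>
definition sumUV :: "nat \<Rightarrow> nat \<Rightarrow> (nat \<Rightarrow> int) monoid" where
  "sumUV m n = \<lparr> carrier = {f. (\<forall>i. f i \<in> {0, 1}) \<and> (\<forall>i\<ge>2 * (m + n). f i = 0)},
                  monoid.mult = (\<lambda>f g i. (f i + g i) mod 2),
                  one = (\<lambda>i. 0) \<rparr>"

definition qUV :: "nat \<Rightarrow> nat \<Rightarrow> (nat \<Rightarrow> int) \<Rightarrow> rat" where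
  "qUV m n f = of_int ((\<Sum>i<m. f (2*i) * f (2*i+1))
      + (\<Sum>i\<in>{m..<m+n}. f (2*i)^2 + f (2*i) * f (2*i+1) + f (2*i+1)^2))"

end

theory Submission
  imports Defs
begin



section \<open>Rational congruences\<close>

lemma cong1_iff: "cong1 a b \<longleftrightarrow> (\<exists>k::int. a = b + of_int k)"
  unfolding cong1_def by (metis Ints_cases Ints_of_int add_diff_cancel_left' diff_add_cancel add.commute)

lemma cong2_iff: "cong2 a b \<longleftrightarrow> (\<exists>k::int. a = b + 2 * of_int k)"
proof
  assume "cong2 a b"
  then obtain k where "(a - b) / 2 = of_int k" unfolding cong2_def by (auto elim: Ints_cases)
  then show "\<exists>k::int. a = b + 2 * of_int k" by (intro exI[of _ k]) (simp add: field_simps)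
next
  assume "\<exists>k::int. a = b + 2 * of_int k"
  then obtain k::int where "a = b + 2 * of_int k" by blast
  then have "(a - b)/2 = of_int k" by simp
  then show "cong2 a b" unfolding cong2_def by (metis Ints_of_int)
qed

lemma cong1_refl[simp]: "cong1 a a" by (simp add: cong1_def)
lemma cong2_refl[simp]: "cong2 a a" by (simp add: cong2_def)

lemma cong1_sym: "cong1 a b \<Longrightarrow> cong1 b a"
  unfolding cong1_iff by (metis add.commute add_diff_cancel_left' diff_conv_add_uminus of_int_minus)
lemma cong2_sym: "cong2 a b \<Longrightarrow> cong2 b a"
  unfolding cong2_iff by (metis add.commute add_diff_cancel_left' diff_conv_add_uminus of_int_minus mult_minus_right)

lemma cong1_trans: "cong1 a b \<Longrightarrow> cong1 b c \<Longrightarrow> cong1 a c"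
  unfolding cong1_iff by (metis add.assoc of_int_add)
lemma cong2_trans: "cong2 a b \<Longrightarrow> cong2 b c \<Longrightarrow> cong2 a c"
  unfolding cong2_iff by (metis add.assoc of_int_add distrib_left)

lemma cong1_add: "cong1 a b \<Longrightarrow> cong1 c d \<Longrightarrow> cong1 (a + c) (b + d)"
  unfolding cong1_iff by (metis (no_types, opaque_lifting) add.assoc add.left_commute of_int_add)
lemma cong2_add: "cong2 a b \<Longrightarrow> cong2 c d \<Longrightarrow> cong2 (a + c) (b + d)"
  unfolding cong2_iff
proof (elim exE)
  fix k l :: int assume "a = b + 2 * of_int k" "c = d + 2 * of_int l"
  then show "\<exists>m::int. a + c = b + d + 2 * of_int m" by (intro exI[of _ "k+l"]) (simp add: algebra_simps)
qed
lemma cong1_neg: "cong1 a b \<Longrightarrow> cong1 (- a) (- b)"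
  unfolding cong1_iff by (metis minus_add_distrib of_int_minus)
lemma cong2_neg: "cong2 a b \<Longrightarrow> cong2 (- a) (- b)"
  unfolding cong2_iff by (metis minus_add_distrib of_int_minus mult_minus_right)

lemma cong2_imp_cong1: "cong2 a b \<Longrightarrow> cong1 a b"
  unfolding cong2_iff cong1_iff by (metis of_int_mult of_int_numeral)

lemma cong1_double: "cong1 a b \<Longrightarrow> cong2 (2*a) (2*b)"
  unfolding cong2_iff cong1_iff by (auto simp: algebra_simps)

lemma cong2_half: "cong2 a b \<Longrightarrow> cong1 (a/2) (b/2)"
  unfolding cong2_iff cong1_iff by (auto simp: field_simps)

lemma cong1_half_cases:
  assumes "cong1 (2*a) 0" shows "cong1 a 0 \<or> cong1 a (1/2)"
proof -
  obtain k::int where k: "2*a = of_int k" using assms unfolding cong1_iff by auto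
  show ?thesis
  proof (cases "even k")
    case True then obtain j where "k = 2*j" by auto
    with k have "a = of_int j" by simp
    then show ?thesis unfolding cong1_iff by auto
  next
    case False then obtain j where "k = 2*j+1" using oddE by blast
    with k have "a = 1/2 + of_int j" by (simp add: field_simps)
    then show ?thesis unfolding cong1_iff by auto
  qed
qed

lemma cong1_0_half: "cong1 a 0 \<Longrightarrow> cong1 a (1/2) \<Longrightarrow> False"
proof -
  assume "cong1 a 0" "cong1 a (1/2)"
  then have "cong1 0 (1/2)" by (meson cong1_sym cong1_trans)
  then obtain k::int where "(0::rat) = 1/2 + of_int k" unfolding cong1_iff by auto
  then have "(1::rat) = 2 * of_int (-k)" by (simp add: field_simps)
  then have "(1::int) = 2 * (-k)" by (metis of_int_eq_iff of_int_mult of_int_numeral of_int_1)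
  then show False by presburger
qed

lemma cong2_0_1: "cong2 a 0 \<Longrightarrow> cong2 a 1 \<Longrightarrow> False"
proof -
  assume "cong2 a 0" "cong2 a 1"
  then have "cong2 0 1" by (meson cong2_sym cong2_trans)
  then obtain k::int where "(0::rat) = 1 + 2 * of_int k" unfolding cong2_iff by auto
  then have "(1::rat) = 2 * of_int (-k)" by (simp add: field_simps)
  then have "(1::int) = 2 * (-k)" by (metis of_int_eq_iff of_int_mult of_int_numeral of_int_1)
  then show False by presburger
qed

lemma cong2_bool: "cong2 (of_bool a + of_bool b) (of_bool (a \<noteq> b))"
  unfolding cong2_iff by (cases a; cases b) (auto intro: exI[of _ 1] exI[of _ 0])




locale fqf = comm_group A for A (structure) +
  fixes q :: "'a \<Rightarrow> rat"
  assumes qpow: "\<And>x n. x \<in> carrier A \<Longrightarrow> cong2 (q (x [^] (n::int))) (of_int (n^2) * q x)"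
    and blin: "\<And>x x' y. x \<in> carrier A \<Longrightarrow> x' \<in> carrier A \<Longrightarrow> y \<in> carrier A \<Longrightarrow>
        cong1 (bform A q (x \<otimes> x') y) (bform A q x y + bform A q x' y)"
begin

definition bt where "bt x y \<longleftrightarrow> \<not> cong1 (bform A q x y) 0"
definition ord2 where "ord2 x \<longleftrightarrow> x \<in> carrier A \<and> x \<otimes> x = \<one>"
definition int2 where "int2 x \<longleftrightarrow> cong2 (q x) 0 \<or> cong2 (q x) 1"
definition qb where "qb x \<longleftrightarrow> cong2 (q x) 1"

lemma ord2_carrier: "ord2 z \<Longrightarrow> z \<in> carrier A" unfolding ord2_def by blast
lemma ord2_sq: "ord2 z \<Longrightarrow> z \<otimes> z = \<one>" unfolding ord2_def by blast

lemma q_one: "cong2 (q \<one>) 0"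
  using qpow[of \<one> 0] by simp

lemma q_mult_eq: "q (x \<otimes> y) = q x + q y + 2 * bform A q x y"
  by (simp add: bform_def field_simps)

lemma bform_sym: "x \<in> carrier A \<Longrightarrow> y \<in> carrier A \<Longrightarrow> bform A q x y = bform A q y x"
  by (simp add: bform_def m_comm)

lemma bt_sym: "x \<in> carrier A \<Longrightarrow> y \<in> carrier A \<Longrightarrow> bt x y = bt y x"
  by (simp add: bt_def bform_sym)

lemma bform_one: "x \<in> carrier A \<Longrightarrow> cong1 (bform A q x \<one>) 0"
proof -
  assume x: "x \<in> carrier A"
  have "bform A q x \<one> = - (q \<one> / 2)" using x by (simp add: bform_def)
  moreover have "cong1 (- (q \<one> / 2)) (- (0/2))" using cong2_half[OF q_one] by (intro cong1_neg) 
  ultimately show ?thesis by simp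
qed

lemma bt_one[simp]: "x \<in> carrier A \<Longrightarrow> \<not> bt x \<one>"
  using bform_one by (simp add: bt_def)
lemma bt_one'[simp]: "x \<in> carrier A \<Longrightarrow> \<not> bt \<one> x"
  using bform_one bt_sym by (simp add: bt_def)

lemma blin2: "x \<in> carrier A \<Longrightarrow> y \<in> carrier A \<Longrightarrow> y' \<in> carrier A \<Longrightarrow>
        cong1 (bform A q x (y \<otimes> y')) (bform A q x y + bform A q x y')"
  using blin[of y y' x] by (simp add: bform_sym)

lemma bform_ord2: assumes x: "x \<in> carrier A" and z: "ord2 z"
  shows "cong1 (bform A q x z) 0 \<or> cong1 (bform A q x z) (1/2)"
proof -
  have zc: "z \<in> carrier A" and zz: "z \<otimes> z = \<one>" using ord2_carrier[OF z] ord2_sq[OF z] by blast+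
  have h1: "cong1 (bform A q x z + bform A q x z) (bform A q x (z \<otimes> z))"
    using blin2[OF x zc zc] by (rule cong1_sym)
  have h2: "cong1 (bform A q x (z \<otimes> z)) 0" unfolding zz by (rule bform_one[OF x])
  have "cong1 (2 * bform A q x z) 0" using cong1_trans[OF h1 h2] by (simp only: mult_2)
  then show ?thesis by (rule cong1_half_cases)
qed

lemma bt_half: "x \<in> carrier A \<Longrightarrow> ord2 z \<Longrightarrow> bt x z \<longleftrightarrow> cong1 (bform A q x z) (1/2)"
  using bform_ord2[of x z] cong1_0_half[of "bform A q x z"] unfolding bt_def by blast

lemma bt_mult1: assumes x: "x \<in> carrier A" and y: "y \<in> carrier A" and z: "ord2 z"
  shows "bt (x \<otimes> y) z \<longleftrightarrow> (bt x z \<noteq> bt y z)"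
proof -
  have zc: "z \<in> carrier A" using ord2_carrier[OF z] .
  have L: "cong1 (bform A q (x \<otimes> y) z) (bform A q x z + bform A q y z)" using blin[OF x y zc] .
  have xy: "x \<otimes> y \<in> carrier A" using x y by simp
  consider "cong1 (bform A q x z) 0" | "cong1 (bform A q x z) (1/2)" using bform_ord2[OF x z] by blast
  then show ?thesis
  proof cases
    case 1
    consider "cong1 (bform A q y z) 0" | "cong1 (bform A q y z) (1/2)" using bform_ord2[OF y z] by blast
    then show ?thesis
    proof cases
      case a: 1
      have "cong1 (bform A q (x \<otimes> y) z) 0" using cong1_trans[OF L cong1_add[OF 1 a]] by simp
      then show ?thesis using 1 a by (simp add: bt_def)
    next
      case a: 2
      have "cong1 (bform A q (x \<otimes> y) z) (1/2)" using cong1_trans[OF L cong1_add[OF 1 a]] by simp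
      then show ?thesis using 1 a bt_half[OF xy z] bt_half[OF y z] by (simp add: bt_def)
    qed
  next
    case 2
    consider "cong1 (bform A q y z) 0" | "cong1 (bform A q y z) (1/2)" using bform_ord2[OF y z] by blast
    then show ?thesis
    proof cases
      case a: 1
      have "cong1 (bform A q (x \<otimes> y) z) (1/2)" using cong1_trans[OF L cong1_add[OF 2 a]] by simp
      then show ?thesis using 2 a bt_half[OF xy z] bt_half[OF x z] by (simp add: bt_def)
    next
      case a: 2
      have "cong1 (bform A q (x \<otimes> y) z) (1/2 + 1/2)" using cong1_trans[OF L cong1_add[OF 2 a]] by simp
      moreover have "cong1 (1/2 + 1/2 :: rat) 0" by (simp add: cong1_def)
      ultimately have "cong1 (bform A q (x \<otimes> y) z) 0" by (rule cong1_trans)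
      then show ?thesis using 2 a bt_half[OF x z] bt_half[OF y z] by (simp add: bt_def)
    qed
  qed
qed

lemma bt_mult2: "ord2 z \<Longrightarrow> x \<in> carrier A \<Longrightarrow> y \<in> carrier A \<Longrightarrow>
    bt z (x \<otimes> y) \<longleftrightarrow> (bt z x \<noteq> bt z y)"
  using bt_mult1[of x y z] bt_sym[of z "x \<otimes> y"] bt_sym[of z x] bt_sym[of z y] ord2_carrier[of z] by simp

lemma two_bform: "x \<in> carrier A \<Longrightarrow> ord2 z \<Longrightarrow> cong2 (2 * bform A q x z) (of_bool (bt x z))"
proof -
  assume x: "x \<in> carrier A" and z: "ord2 z"
  show ?thesis
  proof (cases "bt x z")
    case True
    then have "cong1 (bform A q x z) (1/2)" using bt_half[OF x z] by simp
    then show ?thesis using True cong1_double by fastforce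
  next
    case False
    then show ?thesis using cong1_double by (fastforce simp: bt_def)
  qed
qed

lemma q_mult: "x \<in> carrier A \<Longrightarrow> ord2 z \<Longrightarrow> cong2 (q (x \<otimes> z)) (q x + q z + of_bool (bt x z))"
  unfolding q_mult_eq by (intro cong2_add two_bform cong2_refl)

lemma int2_of_bool: "int2 x \<Longrightarrow> cong2 (q x) (of_bool (qb x))"
  unfolding int2_def qb_def using cong2_0_1 by auto

lemma of_bool_int2: assumes "cong2 (q x) (of_bool b)" shows "int2 x \<and> qb x = b"
proof (cases b)
  case True then have "cong2 (q x) 1" using assms by simp
  then show ?thesis by (simp add: int2_def qb_def True)
next
  case False then have h: "cong2 (q x) 0" using assms by simp
  have "\<not> cong2 (q x) 1" using cong2_0_1[OF h] by blast
  then show ?thesis using h False by (simp add: int2_def qb_def)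
qed

lemma q_mult_b: assumes "ord2 x" "ord2 z" "int2 x" "int2 z"
  shows "int2 (x \<otimes> z) \<and> qb (x \<otimes> z) = ((qb x \<noteq> qb z) \<noteq> bt x z)"
proof -
  have x: "x \<in> carrier A" using ord2_carrier[OF assms(1)] .
  have "cong2 (q (x \<otimes> z)) (of_bool (qb x) + of_bool (qb z) + of_bool (bt x z))"
    using cong2_trans[OF q_mult[OF x assms(2)] cong2_add[OF cong2_add[OF int2_of_bool[OF assms(3)] int2_of_bool[OF assms(4)]] cong2_refl]] .
  moreover have "cong2 (of_bool (qb x) + of_bool (qb z) + of_bool (bt x z)) (of_bool ((qb x \<noteq> qb z) \<noteq> bt x z) :: rat)"
    using cong2_trans[OF cong2_add[OF cong2_bool cong2_refl] cong2_bool] .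
  ultimately have "cong2 (q (x \<otimes> z)) (of_bool ((qb x \<noteq> qb z) \<noteq> bt x z))" by (rule cong2_trans)
  then show ?thesis by (rule of_bool_int2)
qed

lemma ord2_mult: "ord2 x \<Longrightarrow> ord2 y \<Longrightarrow> ord2 (x \<otimes> y)"
proof -
  assume a: "ord2 x" "ord2 y"
  then have c: "x \<in> carrier A" "y \<in> carrier A" using ord2_carrier by blast+
  have "x \<otimes> y \<otimes> (x \<otimes> y) = (x \<otimes> x) \<otimes> (y \<otimes> y)" using c by (simp add: m_ac)
  also have "\<dots> = \<one>" using ord2_sq[OF a(1)] ord2_sq[OF a(2)] by (simp only:) simp
  finally show ?thesis using c unfolding ord2_def by blast
qed

lemma ord2_one[simp]: "ord2 \<one>" by (simp add: ord2_def)
lemma int2_one[simp]: "int2 \<one>" and qb_one[simp]: "\<not> qb \<one>"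
  using q_one cong2_0_1 by (auto simp: int2_def qb_def)

lemma bt_self: "ord2 u \<Longrightarrow> int2 u \<Longrightarrow> \<not> bt u u"
proof -
  assume u: "ord2 u" "int2 u"
  have uc: "u \<in> carrier A" using ord2_carrier[OF u(1)] .
  have "bform A q u u = q \<one> / 2 - q u" unfolding bform_def ord2_sq[OF u(1)] by simp
  moreover have "cong1 (q \<one> / 2) 0" using cong2_half[OF q_one] by simp
  moreover have "cong1 (q u) 0"
  proof -
    have "cong1 (q u) 0 \<or> cong1 (q u) 1" using u(2) cong2_imp_cong1 by (auto simp: int2_def)
    moreover have "cong1 (1::rat) 0" by (simp add: cong1_def)
    ultimately show ?thesis using cong1_trans[of "q u" 1 0] by blast
  qed
  ultimately have "cong1 (q \<one> / 2 + - q u) (0 + - 0)" 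
    by (intro cong1_add cong1_neg) auto
  then have "cong1 (bform A q u u) 0" using \<open>bform A q u u = q \<one> / 2 - q u\<close> by simp
  then show ?thesis by (simp add: bt_def)
qed

end



context fqf
begin

definition isom where
  "isom h \<longleftrightarrow> h \<in> hom A A \<and> bij_betw h (carrier A) (carrier A) \<and> (\<forall>x\<in>carrier A. cong2 (q (h x)) (q x))"

lemma isom_id: "isom id"
  by (auto simp: isom_def hom_def)

lemma isom_hom: "isom h \<Longrightarrow> h \<in> hom A A" unfolding isom_def by (rule conjunct1)
lemma isom_bij: "isom h \<Longrightarrow> bij_betw h (carrier A) (carrier A)" unfolding isom_def by (elim conjE)
lemma isom_q: "isom h \<Longrightarrow> x \<in> carrier A \<Longrightarrow> cong2 (q (h x)) (q x)" unfolding isom_def by (elim conjE) (erule bspec)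
lemma isom_carrier: "isom h \<Longrightarrow> x \<in> carrier A \<Longrightarrow> h x \<in> carrier A"
  by (rule hom_in_carrier[OF isom_hom])

lemma isom_mult: "isom h \<Longrightarrow> x \<in> carrier A \<Longrightarrow> y \<in> carrier A \<Longrightarrow> h (x \<otimes> y) = h x \<otimes> h y"
  by (rule hom_mult[OF isom_hom])

lemma isom_comp: assumes g: "isom g" and h: "isom h" shows "isom (g \<circ> h)"
  unfolding isom_def
proof (intro conjI ballI)
  show "g \<circ> h \<in> hom A A"
    by (rule homI) (simp_all add: isom_carrier[OF g] isom_carrier[OF h] isom_mult[OF g] isom_mult[OF h])
  show "bij_betw (g \<circ> h) (carrier A) (carrier A)" by (rule bij_betw_trans[OF isom_bij[OF h] isom_bij[OF g]])
  fix x assume x: "x \<in> carrier A"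
  have "cong2 (q (g (h x))) (q (h x))" by (rule isom_q[OF g isom_carrier[OF h x]])
  moreover have "cong2 (q (h x)) (q x)" by (rule isom_q[OF h x])
  ultimately show "cong2 (q ((g \<circ> h) x)) (q x)" using cong2_trans by simp
qed

lemma isom_bform: assumes h: "isom h" and x: "x \<in> carrier A" and y: "y \<in> carrier A"
  shows "cong1 (bform A q (h x) (h y)) (bform A q x y)"
proof -
  have c: "\<And>z. z \<in> carrier A \<Longrightarrow> cong2 (q (h z)) (q z)" using isom_q[OF h] .
  have "cong2 (q (h (x \<otimes> y)) + - q (h x) + - q (h y)) (q (x \<otimes> y) + - q x + - q y)"
    using x y by (intro cong2_add cong2_neg c) auto
  then have "cong1 ((q (h (x \<otimes> y)) + - q (h x) + - q (h y))/2) ((q (x \<otimes> y) + - q x + - q y)/2)"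
    by (rule cong2_half)
  then show ?thesis using isom_mult[OF h x y] by (simp add: bform_def)
qed

lemma isom_bt: "isom h \<Longrightarrow> x \<in> carrier A \<Longrightarrow> y \<in> carrier A \<Longrightarrow> bt (h x) (h y) = bt x y"
proof -
  assume a: "isom h" "x \<in> carrier A" "y \<in> carrier A"
  have c: "cong1 (bform A q (h x) (h y)) (bform A q x y)" using isom_bform[OF a] .
  have "cong1 (bform A q (h x) (h y)) 0 \<longleftrightarrow> cong1 (bform A q x y) 0"
    using cong1_trans[OF c, of 0] cong1_trans[OF cong1_sym[OF c], of 0] by blast
  then show ?thesis unfolding bt_def by simp
qed

lemma invol_isom:
  assumes c: "\<And>x. x \<in> carrier A \<Longrightarrow> h x \<in> carrier A"
    and m: "\<And>x y. x \<in> carrier A \<Longrightarrow> y \<in> carrier A \<Longrightarrow> h (x \<otimes> y) = h x \<otimes> h y"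
    and i: "\<And>x. x \<in> carrier A \<Longrightarrow> h (h x) = x"
    and qq: "\<And>x. x \<in> carrier A \<Longrightarrow> cong2 (q (h x)) (q x)"
  shows "isom h"
  unfolding isom_def
proof (intro conjI ballI)
  show "h \<in> hom A A" by (intro homI c m)
  show "bij_betw h (carrier A) (carrier A)" by (rule bij_betwI[of _ _ _ h]) (auto intro: c i)
qed (rule qq)

definition rfl where "rfl u x = (if bt x u then x \<otimes> u else x)"
definition pw where "pw g t = (if t then g else \<one>)"
definition eich where "eich u w x = x \<otimes> pw u (bt x w) \<otimes> pw w (bt x u)"

lemma pw_carrier[simp]: "g \<in> carrier A \<Longrightarrow> pw g t \<in> carrier A" by (simp add: pw_def)
lemma pw_ord2: "ord2 g \<Longrightarrow> ord2 (pw g t)" by (simp add: pw_def)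
lemma pw_mult: "ord2 g \<Longrightarrow> pw g s \<otimes> pw g t = pw g (s \<noteq> t)"
  using ord2_sq[of g] ord2_carrier[of g] by (cases s; cases t) (simp_all add: pw_def)
lemma bt_pw2: "x \<in> carrier A \<Longrightarrow> g \<in> carrier A \<Longrightarrow> bt x (pw g t) = (t \<and> bt x g)"
  by (simp add: pw_def)
lemma bt_pw1: "x \<in> carrier A \<Longrightarrow> g \<in> carrier A \<Longrightarrow> bt (pw g t) x = (t \<and> bt g x)"
  by (simp add: pw_def)
lemma int2_pw: "int2 g \<Longrightarrow> int2 (pw g t)" by (simp add: pw_def)
lemma qb_pw: "qb (pw g t) = (t \<and> qb g)" by (simp add: pw_def)

lemma rfl_isom: assumes u: "ord2 u" and qu: "cong2 (q u) 1" shows "isom (rfl u)"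
proof -
  have uc: "u \<in> carrier A" using ord2_carrier[OF u] .
  have uu: "u \<otimes> u = \<one>" using ord2_sq[OF u] .
  have i2: "int2 u" using qu by (simp add: int2_def)
  have nb: "\<not> bt u u" by (rule bt_self[OF u i2])
  show ?thesis
  proof (rule invol_isom)
    fix x assume x: "x \<in> carrier A"
    show "rfl u x \<in> carrier A" using x uc by (simp add: rfl_def)
    show "rfl u (rfl u x) = x"
    proof (cases "bt x u")
      case True
      have "bt (x \<otimes> u) u = (bt x u \<noteq> bt u u)" by (rule bt_mult1[OF x uc u])
      then have "bt (x \<otimes> u) u" using True nb by simp
      moreover have "x \<otimes> u \<otimes> u = x" using x uc by (simp add: m_assoc uu)
      ultimately show ?thesis using True by (simp add: rfl_def)
    qed (simp add: rfl_def)
    show "cong2 (q (rfl u x)) (q x)"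
    proof (cases "bt x u")
      case True
      have 1: "cong2 (q (x \<otimes> u)) (q x + q u + of_bool (bt x u))" by (rule q_mult[OF x u])
      have 2: "cong2 (q x + q u + of_bool (bt x u)) (q x + 1 + 1)" using True by (intro cong2_add qu cong2_refl) simp
      have 3: "cong2 (q x + 1 + 1) (q x)" unfolding cong2_iff by (intro exI[of _ 1]) simp
      show ?thesis using True cong2_trans[OF cong2_trans[OF 1 2] 3] by (simp add: rfl_def)
    qed (simp add: rfl_def)
  next
    fix x y assume x: "x \<in> carrier A" and y: "y \<in> carrier A"
    have b: "bt (x \<otimes> y) u = (bt x u \<noteq> bt y u)" by (rule bt_mult1[OF x y u])
    show "rfl u (x \<otimes> y) = rfl u x \<otimes> rfl u y"
    proof (cases "bt x u"; cases "bt y u")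
      assume "bt x u" "bt y u"
      then show ?thesis using b x y uc by (simp add: rfl_def m_ac) (simp add: m_assoc[symmetric] uu)
    qed (use b x y uc in \<open>simp_all add: rfl_def m_ac\<close>)
  qed
qed

lemma rfl_fix: "\<not> bt x u \<Longrightarrow> rfl u x = x" by (simp add: rfl_def)

lemma q_pw0: "cong2 (q g) 0 \<Longrightarrow> cong2 (q (pw g t)) 0"
  using q_one by (simp add: pw_def)

lemma eich_isom: assumes u: "ord2 u" and w: "ord2 w" and qu: "cong2 (q u) 0" and qw: "cong2 (q w) 0"
    and uw: "\<not> bt u w"
  shows "isom (eich u w)"
proof -
  have uc: "u \<in> carrier A" using ord2_carrier[OF u] .
  have wc: "w \<in> carrier A" using ord2_carrier[OF w] .
  have nuu: "\<not> bt u u" using bt_self[OF u] qu by (simp add: int2_def)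
  have nww: "\<not> bt w w" using bt_self[OF w] qw by (simp add: int2_def)
  have nwu: "\<not> bt w u" using uw bt_sym[OF uc wc] by simp
  show ?thesis
  proof (rule invol_isom)
    fix x assume x: "x \<in> carrier A"
    show "eich u w x \<in> carrier A" using x uc wc by (simp add: eich_def)
    define a where "a = bt x w"
    define d where "d = bt x u"
    have ex: "eich u w x = x \<otimes> pw u a \<otimes> pw w d" by (simp add: eich_def a_def d_def)
    have c1: "x \<otimes> pw u a \<in> carrier A" using x uc by simp
    have b1: "bt (x \<otimes> pw u a \<otimes> pw w d) w = a"
      using bt_mult1[OF c1 pw_carrier[OF wc] w] bt_mult1[OF x pw_carrier[OF uc] w]
      bt_pw1[OF wc uc] bt_pw1[OF wc wc] uw nww a_def by simp
    have b2: "bt (x \<otimes> pw u a \<otimes> pw w d) u = d"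
      using bt_mult1[OF c1 pw_carrier[OF wc] u] bt_mult1[OF x pw_carrier[OF uc] u]
      bt_pw1[OF uc uc] bt_pw1[OF uc wc] nuu nwu d_def by simp
    show "eich u w (eich u w x) = x"
    proof -
      have "eich u w (eich u w x) = x \<otimes> pw u a \<otimes> pw w d \<otimes> pw u a \<otimes> pw w d"
        unfolding ex by (subst eich_def) (simp only: b1 b2)
      also have "\<dots> = x \<otimes> (pw u a \<otimes> pw u a) \<otimes> (pw w d \<otimes> pw w d)"
        using x uc wc by (simp add: m_ac)
      also have "\<dots> = x" using pw_mult[OF u] pw_mult[OF w] x by (simp add: pw_def)
      finally show ?thesis .
    qed
    show "cong2 (q (eich u w x)) (q x)"
    proof -
      have 1: "cong2 (q (x \<otimes> pw u a \<otimes> pw w d)) (q (x \<otimes> pw u a) + q (pw w d) + of_bool (bt (x \<otimes> pw u a) (pw w d)))"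
        by (rule q_mult[OF c1 pw_ord2[OF w]])
      have 2: "cong2 (q (x \<otimes> pw u a)) (q x + q (pw u a) + of_bool (bt x (pw u a)))"
        by (rule q_mult[OF x pw_ord2[OF u]])
      have e1: "bt x (pw u a) = (a \<and> d)" using bt_pw2[OF x uc] d_def by auto
      have e2: "bt (x \<otimes> pw u a) (pw w d) = (a \<and> d)"
        using bt_pw2[OF c1 wc] bt_mult1[OF x pw_carrier[OF uc] w] bt_pw1[OF wc uc] uw a_def by auto
      have h2b: "cong2 (q (x \<otimes> pw u a)) (q x + 0 + of_bool (a \<and> d))"
        using cong2_trans[OF 2 cong2_add[OF cong2_add[OF cong2_refl q_pw0[OF qu]] cong2_refl]] e1 by simp
      have 3: "cong2 (q (x \<otimes> pw u a) + q (pw w d) + of_bool (bt (x \<otimes> pw u a) (pw w d)))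
                     ((q x + 0 + of_bool (a \<and> d)) + 0 + of_bool (a \<and> d))"
        unfolding e2 by (rule cong2_add[OF cong2_add[OF h2b q_pw0[OF qw]] cong2_refl])
      have 4: "cong2 ((q x + 0 + of_bool (a \<and> d)) + 0 + of_bool (a \<and> d)) (q x)"
        unfolding cong2_iff by (cases "a \<and> d") (auto intro: exI[of _ 1] exI[of _ 0])
      show ?thesis unfolding ex using cong2_trans[OF cong2_trans[OF 1 3] 4] .
    qed
  next
    fix x y assume x: "x \<in> carrier A" and y: "y \<in> carrier A"
    have b1: "bt (x \<otimes> y) w = (bt x w \<noteq> bt y w)" by (rule bt_mult1[OF x y w])
    have b2: "bt (x \<otimes> y) u = (bt x u \<noteq> bt y u)" by (rule bt_mult1[OF x y u])
    have "eich u w (x \<otimes> y) = x \<otimes> y \<otimes> (pw u (bt x w) \<otimes> pw u (bt y w)) \<otimes> (pw w (bt x u) \<otimes> pw w (bt y u))"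
      unfolding eich_def b1 b2 pw_mult[OF u] pw_mult[OF w] ..
    also have "\<dots> = eich u w x \<otimes> eich u w y" using x y uc wc by (simp add: eich_def m_ac)
    finally show "eich u w (x \<otimes> y) = eich u w x \<otimes> eich u w y" .
  qed
qed

lemma eich_fix: "x \<in> carrier A \<Longrightarrow> \<not> bt x u \<Longrightarrow> \<not> bt x w \<Longrightarrow> eich u w x = x"
  by (simp add: eich_def pw_def)

end



lemma half_xor:
  assumes a: "cong1 a 0 \<or> cong1 a (1/2)" and b: "cong1 b 0 \<or> cong1 b (1/2)" and c: "cong1 c (a + b)"
  shows "(\<not> cong1 c 0) = ((\<not> cong1 a 0) \<noteq> (\<not> cong1 b 0))"
proof -
  have h: "cong1 (1/2 + 1/2 :: rat) 0" by (simp add: cong1_def)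
  from a show ?thesis
  proof
    assume a0: "cong1 a 0"
    from b show ?thesis
    proof
      assume b0: "cong1 b 0"
      have "cong1 c 0" using cong1_trans[OF c cong1_add[OF a0 b0]] by simp
      then show ?thesis using a0 b0 by simp
    next
      assume b0: "cong1 b (1/2)"
      have "cong1 c (1/2)" using cong1_trans[OF c cong1_add[OF a0 b0]] by simp
      then show ?thesis using a0 b0 cong1_0_half by blast
    qed
  next
    assume a0: "cong1 a (1/2)"
    from b show ?thesis
    proof
      assume b0: "cong1 b 0"
      have "cong1 c (1/2)" using cong1_trans[OF c cong1_add[OF a0 b0]] by simp
      then show ?thesis using a0 b0 cong1_0_half by blast
    next
      assume b0: "cong1 b (1/2)"
      have "cong1 c 0" using cong1_trans[OF cong1_trans[OF c cong1_add[OF a0 b0]] h] .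
      then show ?thesis using a0 b0 cong1_0_half by blast
    qed
  qed
qed

type_synonym v4 = "bool \<times> bool \<times> bool \<times> bool"

fun vx :: "v4 \<Rightarrow> v4 \<Rightarrow> v4" where
  "vx (a0,a1,a2,a3) (b0,b1,b2,b3) = (a0 \<noteq> b0, a1 \<noteq> b1, a2 \<noteq> b2, a3 \<noteq> b3)"

definition z4 :: v4 where "z4 = (False, False, False, False)"

datatype step = Rf v4 | Ei v4 v4

primrec runw :: "(step \<Rightarrow> 'a \<Rightarrow> 'a) \<Rightarrow> step list \<Rightarrow> 'a \<Rightarrow> 'a" where
  "runw R [] x = x"
| "runw R (s # ws) x = runw R ws (R s x)"

definition wordtab :: "bool \<Rightarrow> bool \<Rightarrow> bool \<Rightarrow> bool \<Rightarrow> bool \<Rightarrow> step list" where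
  "wordtab c x1 x2 x3 x4 = (if c then (if x1 then (if x2 then (if x3 then (if x4 then [Rf (False, True, False, True), Rf (True, False, True, False)] else [Rf (False, False, True, False), Rf (False, True, True, True), Rf (True, False, True, False)]) else (if x4 then [Rf (False, True, False, True), Rf (True, True, True, True)] else [Rf (False, False, True, False), Rf (True, False, True, False), Rf (True, True, False, True)])) else (if x3 then (if x4 then [Rf (False, True, False, True), Rf (True, False, True, False)] else [Rf (False, False, True, False), Rf (False, True, True, True), Rf (True, False, True, False)]) else (if x4 then [Rf (False, False, False, True), Rf (False, True, False, True), Rf (True, False, True, True)] else [Rf (True, False, True, False), Rf (True, True, True, True)]))) else (if x2 then (if x3 then (if x4 then [Rf (False, False, False, True), Rf (False, True, False, True), Rf (True, True, True, False)] else [Rf (False, False, False, True), Rf (False, False, True, False), Rf (False, True, True, True), Rf (True, True, True, False)]) else (if x4 then [Rf (False, False, False, True), Rf (False, True, False, True), Rf (True, False, True, True)] else [Rf (False, False, True, True), Rf (True, False, False, True), Rf (True, True, True, True)])) else (if x3 then (if x4 then [Rf (False, False, False, True), Rf (False, True, False, True), Rf (True, True, True, False)] else [Rf (False, False, True, True), Rf (False, True, True, False), Rf (True, True, True, True)]) else (if x4 then [Rf (False, True, False, True), Rf (True, True, True, True)] else [Ei (False, True, False, True) (True, False, True, False)])))) else (if x1 then (if x2 then (if x3 then (if x4 then [Rf (False, True, False, True), Rf (True, False, True, False)] else [Rf (True, False, True, False), Ei (False, True, False, True) (True, False, False, False)]) else (if x4 then [Rf (False, True, False, True), Rf (True, True,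 True, True)] else [Rf (False, True, True, True), Ei (False, False, True, False) (True, True, False, True)])) else (if x3 then (if x4 then [Rf (False, True, False, True), Rf (True, False, True, False)] else [Rf (True, False, True, False), Ei (False, True, True, True) (True, False, False, False)]) else (if x4 then [Rf (False, True, False, True), Ei (False, False, True, False) (True, True, False, True)] else [Rf (True, False, True, False), Rf (True, True, True, True)]))) else (if x2 then (if x3 then (if x4 then [Rf (False, True, False, True), Ei (False, True, False, False) (True, False, True, False)] else [Ei (False, False, False, True) (True, False, True, False), Ei (False, False, True, False) (False, True, False, True)]) else (if x4 then [Rf (False, True, False, True), Ei (False, True, False, False) (True, False, True, True)] else [Ei (False, False, False, True) (True, False, True, False), Ei (False, True, False, True) (True, False, False, False)])) else (if x3 then (if x4 then [Rf (False, True, False, True), Ei (False, True, False, False) (True, False, True, False)] else [Ei (False, False, False, True) (True, False, False, False), Ei (False, False, True, False) (False, True, False, True)]) else (if x4 then [Rf (False, True, False, True), Rf (True, True, True, True)] else [Ei (False, True, False, True) (True, False, True, False)])))))"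

context fqf
begin

lemma bt_mult1': assumes x: "x \<in> carrier A" and y: "ord2 y" and y': "ord2 y'"
  shows "bt (y \<otimes> y') x = (bt y x \<noteq> bt y' x)"
proof -
  have yc: "y \<in> carrier A" "y' \<in> carrier A" using y y' ord2_carrier by blast+
  have "cong1 (bform A q y x) 0 \<or> cong1 (bform A q y x) (1/2)"
    using bform_ord2[OF x y] bform_sym[OF x yc(1)] by simp
  moreover have "cong1 (bform A q y' x) 0 \<or> cong1 (bform A q y' x) (1/2)"
    using bform_ord2[OF x y'] bform_sym[OF x yc(2)] by simp
  moreover have "cong1 (bform A q (y \<otimes> y') x) (bform A q y x + bform A q y' x)"
    by (rule blin[OF yc x])
  ultimately show ?thesis unfolding bt_def by (rule half_xor)
qed

lemma isom_runw: "(\<forall>s\<in>set ws. isom (R s)) \<Longrightarrow> isom (runw R ws)"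
proof (induction ws)
  case Nil
  have "runw R [] = id" by (rule ext) simp
  then show ?case using isom_id by metis
next
  case (Cons s ws)
  have e: "runw R (s # ws) = runw R ws \<circ> R s" by (rule ext) simp
  have "isom (runw R ws \<circ> R s)" using Cons by (intro isom_comp) auto
  then show ?case unfolding e .
qed

lemma fix_runw: "(\<forall>s\<in>set ws. R s x = x) \<Longrightarrow> runw R ws x = x"
  by (induction ws) auto

end

locale four = fqf +
  fixes g0 g1 g2 g3
  assumes o0: "ord2 g0" and o1: "ord2 g1" and o2: "ord2 g2" and o3: "ord2 g3"
    and i0: "int2 g0" and i1: "int2 g1" and i2: "int2 g2" and i3: "int2 g3"
begin

lemma gc: "g0 \<in> carrier A" "g1 \<in> carrier A" "g2 \<in> carrier A" "g3 \<in> carrier A"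
  using o0 o1 o2 o3 ord2_carrier by blast+

definition LL :: "v4 \<Rightarrow> 'a" where
  "LL a = (case a of (a0,a1,a2,a3) \<Rightarrow> pw g0 a0 \<otimes> pw g1 a1 \<otimes> pw g2 a2 \<otimes> pw g3 a3)"

lemma LL_simp: "LL (a0,a1,a2,a3) = pw g0 a0 \<otimes> pw g1 a1 \<otimes> pw g2 a2 \<otimes> pw g3 a3"
  by (simp add: LL_def)

lemma LL_ord2: "ord2 (LL a)"
  by (cases a) (simp add: LL_simp ord2_mult pw_ord2 o0 o1 o2 o3)

lemma LL_carrier: "LL a \<in> carrier A"
  using LL_ord2 ord2_carrier by blast

lemma LL_mult: "LL a \<otimes> LL b = LL (vx a b)"
proof -
  obtain a0 a1 a2 a3 where a: "a = (a0,a1,a2,a3)" by (cases a) auto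
  obtain b0 b1 b2 b3 where b: "b = (b0,b1,b2,b3)" by (cases b) auto
  have "LL a \<otimes> LL b = (pw g0 a0 \<otimes> pw g0 b0) \<otimes> (pw g1 a1 \<otimes> pw g1 b1) \<otimes> (pw g2 a2 \<otimes> pw g2 b2) \<otimes> (pw g3 a3 \<otimes> pw g3 b3)"
    unfolding a b LL_simp using gc by (simp add: m_ac)
  also have "\<dots> = LL (vx a b)" unfolding a b LL_simp vx.simps pw_mult[OF o0] pw_mult[OF o1] pw_mult[OF o2] pw_mult[OF o3] ..
  finally show ?thesis .
qed

lemma LL_z4: "LL z4 = \<one>" by (simp add: z4_def LL_simp pw_def)

lemma LL_gens: "LL (True,False,False,False) = g0" "LL (False,True,False,False) = g1"
   "LL (False,False,True,False) = g2" "LL (False,False,False,True) = g3"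
  using gc by (simp_all add: LL_simp pw_def)

lemma bt_pw_l: "x \<in> carrier A \<Longrightarrow> g \<in> carrier A \<Longrightarrow> bt (pw g t) x = (t \<and> bt g x)"
  by (simp add: pw_def)

lemma bt_LL_l: assumes x: "x \<in> carrier A"
  shows "bt (LL (a0,a1,a2,a3)) x = ((((a0 \<and> bt g0 x) \<noteq> (a1 \<and> bt g1 x)) \<noteq> (a2 \<and> bt g2 x)) \<noteq> (a3 \<and> bt g3 x))"
  unfolding LL_simp
  using x gc by (simp add: bt_mult1'[OF x] ord2_mult pw_ord2 o0 o1 o2 o3 bt_pw_l)

lemma bt_LL_r: assumes x: "x \<in> carrier A"
  shows "bt x (LL (a0,a1,a2,a3)) = ((((a0 \<and> bt g0 x) \<noteq> (a1 \<and> bt g1 x)) \<noteq> (a2 \<and> bt g2 x)) \<noteq> (a3 \<and> bt g3 x))"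
  using bt_LL_l[OF x] bt_sym[OF x LL_carrier] by simp

lemma bt_LLLL: "bt (LL (a0,a1,a2,a3)) (LL (b0,b1,b2,b3)) =
   ((((a0 \<and> ((((b0 \<and> bt g0 g0) \<noteq> (b1 \<and> bt g1 g0)) \<noteq> (b2 \<and> bt g2 g0)) \<noteq> (b3 \<and> bt g3 g0)))
   \<noteq> (a1 \<and> ((((b0 \<and> bt g0 g1) \<noteq> (b1 \<and> bt g1 g1)) \<noteq> (b2 \<and> bt g2 g1)) \<noteq> (b3 \<and> bt g3 g1))))
   \<noteq> (a2 \<and> ((((b0 \<and> bt g0 g2) \<noteq> (b1 \<and> bt g1 g2)) \<noteq> (b2 \<and> bt g2 g2)) \<noteq> (b3 \<and> bt g3 g2))))
   \<noteq> (a3 \<and> ((((b0 \<and> bt g0 g3) \<noteq> (b1 \<and> bt g1 g3)) \<noteq> (b2 \<and> bt g2 g3)) \<noteq> (b3 \<and> bt g3 g3))))"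
  using gc by (simp add: bt_LL_l[OF LL_carrier] bt_LL_r)

lemma qb_LL: "int2 (LL (a0,a1,a2,a3)) \<and> qb (LL (a0,a1,a2,a3)) =
   (((((((a0 \<and> qb g0) \<noteq> (a1 \<and> qb g1)) \<noteq> (a0 \<and> a1 \<and> bt g0 g1)) \<noteq> (a2 \<and> qb g2))
     \<noteq> (a2 \<and> ((a0 \<and> bt g0 g2) \<noteq> (a1 \<and> bt g1 g2)))) \<noteq> (a3 \<and> qb g3))
     \<noteq> (a3 \<and> (((a0 \<and> bt g0 g3) \<noteq> (a1 \<and> bt g1 g3)) \<noteq> (a2 \<and> bt g2 g3))))"
proof -
  let ?p0 = "pw g0 a0" and ?p1 = "pw g1 a1" and ?p2 = "pw g2 a2" and ?p3 = "pw g3 a3"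
  have po: "ord2 ?p0" "ord2 ?p1" "ord2 ?p2" "ord2 ?p3" using pw_ord2 o0 o1 o2 o3 by blast+
  have pi: "int2 ?p0" "int2 ?p1" "int2 ?p2" "int2 ?p3" using int2_pw i0 i1 i2 i3 by blast+
  have s1: "int2 (?p0 \<otimes> ?p1) \<and> qb (?p0 \<otimes> ?p1) = ((qb ?p0 \<noteq> qb ?p1) \<noteq> bt ?p0 ?p1)"
    by (rule q_mult_b[OF po(1,2) pi(1,2)])
  have s2: "int2 (?p0 \<otimes> ?p1 \<otimes> ?p2) \<and> qb (?p0 \<otimes> ?p1 \<otimes> ?p2) = ((qb (?p0 \<otimes> ?p1) \<noteq> qb ?p2) \<noteq> bt (?p0 \<otimes> ?p1) ?p2)"
    using s1 by (intro q_mult_b ord2_mult po pi) auto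
  have s3: "int2 (?p0 \<otimes> ?p1 \<otimes> ?p2 \<otimes> ?p3) \<and> qb (?p0 \<otimes> ?p1 \<otimes> ?p2 \<otimes> ?p3) = ((qb (?p0 \<otimes> ?p1 \<otimes> ?p2) \<noteq> qb ?p3) \<noteq> bt (?p0 \<otimes> ?p1 \<otimes> ?p2) ?p3)"
    using s2 by (intro q_mult_b ord2_mult po pi) auto
  have b1: "bt ?p0 ?p1 = (a0 \<and> a1 \<and> bt g0 g1)" using gc by (simp add: pw_def)
  have b2: "bt (?p0 \<otimes> ?p1) ?p2 = (a2 \<and> ((a0 \<and> bt g0 g2) \<noteq> (a1 \<and> bt g1 g2)))"
    using gc by (cases a2) (simp_all add: pw_def bt_mult1' po o0 o1 o2 o3)
  have b3: "bt (?p0 \<otimes> ?p1 \<otimes> ?p2) ?p3 = (a3 \<and> (((a0 \<and> bt g0 g3) \<noteq> (a1 \<and> bt g1 g3)) \<noteq> (a2 \<and> bt g2 g3)))"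
    using gc by (cases a3) (simp_all add: pw_def bt_mult1' po ord2_mult o0 o1 o2 o3)
  show ?thesis unfolding LL_simp using s1 s2 s3 b1 b2 b3 by (simp add: qb_pw)
qed

definition rstep :: "step \<Rightarrow> 'a \<Rightarrow> 'a" where
  "rstep s = (case s of Rf u \<Rightarrow> rfl (LL u) | Ei u w \<Rightarrow> eich (LL u) (LL w))"

definition okstep :: "step \<Rightarrow> bool" where
  "okstep s = (case s of Rf u \<Rightarrow> qb (LL u) | Ei u w \<Rightarrow> \<not> qb (LL u) \<and> \<not> qb (LL w) \<and> \<not> bt (LL u) (LL w))"

lemma int2_LL: "int2 (LL a)" using qb_LL by (cases a) blast

lemma rstep_isom: "okstep s \<Longrightarrow> isom (rstep s)"
proof (cases s)
  case (Rf u)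
  assume "okstep s"
  then have "cong2 (q (LL u)) 1" using Rf by (simp add: okstep_def qb_def)
  then show ?thesis using Rf rfl_isom[OF LL_ord2] by (simp add: rstep_def)
next
  case (Ei u w)
  assume "okstep s"
  then have "\<not> qb (LL u)" "\<not> qb (LL w)" "\<not> bt (LL u) (LL w)" using Ei by (simp_all add: okstep_def)
  moreover have "int2 (LL u)" "int2 (LL w)" by (rule int2_LL)+
  ultimately have "cong2 (q (LL u)) 0" "cong2 (q (LL w)) 0" "\<not> bt (LL u) (LL w)"
    by (auto simp: int2_def qb_def)
  then show ?thesis using Ei eich_isom[OF LL_ord2 LL_ord2] by (simp add: rstep_def)
qed

lemma rstep_fix: assumes x: "x \<in> carrier A" and n: "\<not> bt x g0" "\<not> bt x g1" "\<not> bt x g2" "\<not> bt x g3"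
  shows "rstep s x = x"
proof -
  have "\<not> bt x (LL a)" for a using n by (cases a) (simp add: bt_LL_r[OF x] bt_sym[OF x] gc)
  then show ?thesis using x by (cases s) (simp_all add: rstep_def rfl_fix eich_fix)
qed

lemma pw_LL: "pw (LL u) t = LL (if t then u else z4)"
  by (simp add: pw_def LL_z4)

lemma rstep_LL:
  "rstep (Rf u) (LL a) = (if bt (LL a) (LL u) then LL (vx a u) else LL a)"
  "rstep (Ei u w) (LL a) = LL (vx (vx a (if bt (LL a) (LL w) then u else z4)) (if bt (LL a) (LL u) then w else z4))"
  by (simp_all add: rstep_def rfl_def eich_def LL_mult pw_LL)

lemma plane_gen:
  assumes ok: "\<forall>s\<in>set ws. okstep s"
    and r1: "runw rstep ws (LL (False,False,True,False)) = LL (True,False,False,False)"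
    and r2: "runw rstep ws (LL (False,False,False,True)) = LL (False,True,False,False)"
  shows "\<exists>h. isom h \<and> h g2 = g0 \<and> h g3 = g1 \<and>
     (\<forall>x\<in>carrier A. \<not> bt x g0 \<and> \<not> bt x g1 \<and> \<not> bt x g2 \<and> \<not> bt x g3 \<longrightarrow> h x = x)"
proof (intro exI conjI ballI impI)
  show "isom (runw rstep ws)" using ok rstep_isom isom_runw by blast
  show "runw rstep ws g2 = g0" using r1 LL_gens by simp
  show "runw rstep ws g3 = g1" using r2 LL_gens by simp
  fix x assume "x \<in> carrier A" "\<not> bt x g0 \<and> \<not> bt x g1 \<and> \<not> bt x g2 \<and> \<not> bt x g3"
  then show "runw rstep ws x = x" using rstep_fix by (intro fix_runw) blast
qed

lemma plane:
  assumes q1: "qb g1 = qb g0" and q2: "qb g2 = qb g0" and q3: "qb g3 = qb g0"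
    and b01: "bt g0 g1" and b23: "bt g2 g3"
  shows "\<exists>h. isom h \<and> h g2 = g0 \<and> h g3 = g1 \<and>
     (\<forall>x\<in>carrier A. \<not> bt x g0 \<and> \<not> bt x g1 \<and> \<not> bt x g2 \<and> \<not> bt x g3 \<longrightarrow> h x = x)"
proof -
  have sy: "bt g1 g0 = bt g0 g1" "bt g2 g0 = bt g0 g2" "bt g3 g0 = bt g0 g3"
     "bt g2 g1 = bt g1 g2" "bt g3 g1 = bt g1 g3" "bt g3 g2 = bt g2 g3"
    using gc bt_sym by blast+
  have dg: "\<not> bt g0 g0" "\<not> bt g1 g1" "\<not> bt g2 g2" "\<not> bt g3 g3"
    using bt_self o0 o1 o2 o3 i0 i1 i2 i3 by blast+
  note simps = okstep_def rstep_LL bt_LLLL qb_LL sy dg q1 q2 q3 b01 b23 z4_def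
  show ?thesis
    apply (rule plane_gen[of "wordtab (qb g0) (bt g0 g2) (bt g0 g3) (bt g1 g2) (bt g1 g3)"])
    by (cases "qb g0"; cases "bt g0 g2"; cases "bt g0 g3"; cases "bt g1 g2"; cases "bt g1 g3";
        simp add: wordtab_def simps)+
qed

end



definition dl :: "nat \<Rightarrow> nat \<Rightarrow> int" where "dl i = (\<lambda>t. if t = i then 1 else 0)"

lemma sumUV_mult: "x \<otimes>\<^bsub>sumUV m n\<^esub> y = (\<lambda>i. (x i + y i) mod 2)"
  by (simp add: sumUV_def)
lemma sumUV_one: "\<one>\<^bsub>sumUV m n\<^esub> = (\<lambda>i. 0)"
  by (simp add: sumUV_def)
lemma sumUV_carrier: "x \<in> carrier (sumUV m n) \<longleftrightarrow> (\<forall>i. x i \<in> {0, 1}) \<and> (\<forall>i\<ge>2 * (m + n). x i = 0)"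
  by (simp add: sumUV_def)

lemma dl_carrier: "i < 2 * (m + n) \<Longrightarrow> dl i \<in> carrier (sumUV m n)"
  by (auto simp: sumUV_carrier dl_def)

lemma dl_sq: "dl i \<otimes>\<^bsub>sumUV m n\<^esub> dl i = \<one>\<^bsub>sumUV m n\<^esub>"
  by (auto simp: sumUV_mult sumUV_one dl_def)

lemma dl_mult: "i \<noteq> j \<Longrightarrow> dl i \<otimes>\<^bsub>sumUV m n\<^esub> dl j = (\<lambda>t. of_bool (t = i \<or> t = j))"
  by (auto simp: sumUV_mult dl_def)

lemma qUV_ind:
  assumes f: "\<And>t. f t = of_bool (P t)"
  shows "qUV m n f = of_int ((\<Sum>l<m. of_bool (P (2*l) \<and> P (2*l+1)))
     + (\<Sum>l\<in>{m..<m+n}. of_bool (P (2*l)) + of_bool (P (2*l+1)) + of_bool (P (2*l) \<and> P (2*l+1))))"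
proof -
  have e1: "(\<Sum>l<m. f (2*l) * f (2*l+1)) = (\<Sum>l<m. of_bool (P (2*l) \<and> P (2*l+1)))"
    by (rule sum.cong) (simp_all add: f)
  have e2: "(\<Sum>l\<in>{m..<m+n}. f (2*l)^2 + f (2*l) * f (2*l+1) + f (2*l+1)^2)
      = (\<Sum>l\<in>{m..<m+n}. of_bool (P (2*l)) + of_bool (P (2*l+1)) + of_bool (P (2*l) \<and> P (2*l+1)))"
    by (rule sum.cong) (simp_all add: f)
  show ?thesis unfolding qUV_def e1 e2 ..
qed

lemma sum_delta_nat: "finite S \<Longrightarrow> (\<Sum>l\<in>S. (of_bool (l = k) :: int)) = of_bool (k \<in> S)"
  by (simp add: of_bool_def)

lemma sum_delta_nat2: "finite S \<Longrightarrow> (\<Sum>l\<in>S. (of_bool (l = k \<and> c) :: int)) = of_bool (k \<in> S \<and> c)"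
  by (cases c) (simp_all add: of_bool_def)

lemma sum_zero_int: "(\<Sum>l\<in>S. (0::int)) = 0" by simp

lemma qUV_dl:
  assumes "i < 2 * (m + n)"
  shows "qUV m n (dl i) = of_bool (m \<le> i div 2)"
proof -
  have a: "\<And>l. of_bool (2*l = i \<and> 2*l+1 = i) = (0::int)" by auto
  have b: "(of_bool (2*l = i) + of_bool (2*l+1 = i) + 0 :: int) = of_bool (l = i div 2)" for l
  proof -
    have "2*l = i \<or> 2*l+1 = i \<longleftrightarrow> l = i div 2" by presburger
    moreover have "\<not> (2*l = i \<and> 2*l+1 = i)" by presburger
    ultimately show ?thesis by (cases "2*l = i"; cases "2*l+1 = i") auto
  qed
  note b = b[unfolded add_0_right]
  have "qUV m n (dl i) = of_int ((\<Sum>l<m. of_bool (2*l = i \<and> 2*l+1 = i))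
     + (\<Sum>l\<in>{m..<m+n}. of_bool (2*l = i) + of_bool (2*l+1 = i) + of_bool (2*l = i \<and> 2*l+1 = i)))"
    by (rule qUV_ind) (simp add: dl_def)
  also have "\<dots> = of_int (0 + of_bool (i div 2 \<in> {m..<m+n}))"
    unfolding a add_0_right b sum_zero_int sum_delta_nat[OF finite_atLeastLessThan] ..
  also have "\<dots> = of_bool (m \<le> i div 2)" using assms by auto
  finally show ?thesis .
qed

lemma qUV_one: "qUV m n (\<lambda>i. 0) = 0"
  by (simp add: qUV_def)

lemma qUV_pair:
  assumes "i < 2 * (m + n)" "j < 2 * (m + n)" "i \<noteq> j"
  shows "qUV m n (\<lambda>t. of_bool (t = i \<or> t = j)) =
     of_bool (m \<le> i div 2) + of_bool (m \<le> j div 2) + of_bool (i div 2 = j div 2)"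
proof -
  let ?P = "\<lambda>t. t = i \<or> t = j"
  have a: "(of_bool (?P (2*l) \<and> ?P (2*l+1)) :: int) = of_bool (l = i div 2 \<and> i div 2 = j div 2)" for l
  proof -
    have "(?P (2*l) \<and> ?P (2*l+1)) \<longleftrightarrow> (l = i div 2 \<and> i div 2 = j div 2)" using assms(3) by presburger
    then show ?thesis by simp
  qed
  have b: "(of_bool (?P (2*l)) + of_bool (?P (2*l+1)) + of_bool (l = i div 2 \<and> i div 2 = j div 2) :: int)
      = of_bool (l = i div 2) + of_bool (l = j div 2) + of_bool (l = i div 2 \<and> i div 2 = j div 2)" for l
  proof -
    have h1: "2*l = i \<or> 2*l+1 = i \<longleftrightarrow> l = i div 2" by presburger
    have h2: "2*l = j \<or> 2*l+1 = j \<longleftrightarrow> l = j div 2" by presburger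
    have h3: "(l = i div 2 \<and> i div 2 = j div 2) \<longleftrightarrow> (l = i div 2 \<and> l = j div 2)" by auto
    have x: "\<not> (2*l = i \<and> 2*l+1 = i)" "\<not> (2*l = j \<and> 2*l+1 = j)" "\<not> (2*l = i \<and> 2*l = j)"
       "\<not> (2*l+1 = i \<and> 2*l+1 = j)" using assms(3) by presburger+
    show ?thesis unfolding a[symmetric] h3 unfolding h1[symmetric] h2[symmetric] using x
      by (cases "2*l = i"; cases "2*l+1 = i"; cases "2*l = j"; cases "2*l+1 = j") simp_all
  qed
  have "qUV m n (\<lambda>t. of_bool (?P t)) = of_int ((\<Sum>l<m. of_bool (?P (2*l) \<and> ?P (2*l+1)))
     + (\<Sum>l\<in>{m..<m+n}. of_bool (?P (2*l)) + of_bool (?P (2*l+1)) + of_bool (?P (2*l) \<and> ?P (2*l+1))))"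
    by (rule qUV_ind) simp
  also have "\<dots> = of_int (of_bool (i div 2 \<in> {..<m} \<and> i div 2 = j div 2)
     + (of_bool (i div 2 \<in> {m..<m+n}) + of_bool (j div 2 \<in> {m..<m+n})
        + of_bool (i div 2 \<in> {m..<m+n} \<and> i div 2 = j div 2)))"
    unfolding a b sum.distrib sum_delta_nat[OF finite_atLeastLessThan] sum_delta_nat2[OF finite_atLeastLessThan]
      sum_delta_nat2[OF finite_lessThan] ..
  also have "\<dots> = of_bool (m \<le> i div 2) + of_bool (m \<le> j div 2) + of_bool (i div 2 = j div 2)"
    using assms by (cases "i div 2 = j div 2"; cases "m \<le> i div 2"; cases "m \<le> j div 2") auto
  finally show ?thesis by simp
qed

lemma bform_dl_same: "i < 2 * (m + n) \<Longrightarrow> cong1 (bform (sumUV m n) (qUV m n) (dl i) (dl i)) 0"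
  unfolding bform_def dl_sq sumUV_one qUV_one
  by (simp add: qUV_dl cong1_def)

lemma bform_dl_pair:
  assumes "i < 2 * (m + n)" "j < 2 * (m + n)" "i \<noteq> j"
  shows "bform (sumUV m n) (qUV m n) (dl i) (dl j) = (if i div 2 = j div 2 then 1/2 else 0)"
  unfolding bform_def dl_mult[OF assms(3)] qUV_pair[OF assms] qUV_dl[OF assms(1)] qUV_dl[OF assms(2)]
  using assms by auto




context fqf
begin

lemma emb_hom: "qf_embedding Q p A q f \<Longrightarrow> f \<in> hom Q A"
  unfolding qf_embedding_def by blast

lemma emb_q: "qf_embedding Q p A q f \<Longrightarrow> x \<in> carrier Q \<Longrightarrow> cong2 (q (f x)) (p x)"
  unfolding qf_embedding_def by blast

lemma hom_one_gen:
  assumes h: "f \<in> hom Q A" and o: "\<one>\<^bsub>Q\<^esub> \<in> carrier Q" and oo: "\<one>\<^bsub>Q\<^esub> \<otimes>\<^bsub>Q\<^esub> \<one>\<^bsub>Q\<^esub> = \<one>\<^bsub>Q\<^esub>"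
  shows "f \<one>\<^bsub>Q\<^esub> = \<one>"
proof -
  have c: "f \<one>\<^bsub>Q\<^esub> \<in> carrier A" using hom_in_carrier[OF h o] .
  have "f \<one>\<^bsub>Q\<^esub> \<otimes> f \<one>\<^bsub>Q\<^esub> = f \<one>\<^bsub>Q\<^esub>" using hom_mult[OF h o o] oo by simp
  then show ?thesis using c by simp
qed

lemma emb_bform:
  assumes e: "qf_embedding Q p A q f" and x: "x \<in> carrier Q" and y: "y \<in> carrier Q"
    and xy: "x \<otimes>\<^bsub>Q\<^esub> y \<in> carrier Q"
  shows "cong1 (bform A q (f x) (f y)) (bform Q p x y)"
proof -
  have "cong2 (q (f (x \<otimes>\<^bsub>Q\<^esub> y)) + - q (f x) + - q (f y)) (p (x \<otimes>\<^bsub>Q\<^esub> y) + - p x + - p y)"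
    using e x y xy by (intro cong2_add cong2_neg emb_q) auto
  then have "cong1 ((q (f (x \<otimes>\<^bsub>Q\<^esub> y)) + - q (f x) + - q (f y))/2) ((p (x \<otimes>\<^bsub>Q\<^esub> y) + - p x + - p y)/2)"
    by (rule cong2_half)
  then show ?thesis using hom_mult[OF emb_hom[OF e] x y] by (simp add: bform_def)
qed

lemma sumUV_one_carrier: "\<one>\<^bsub>sumUV m n\<^esub> \<in> carrier (sumUV m n)"
  by (simp add: sumUV_carrier sumUV_one)
lemma sumUV_one_one: "\<one>\<^bsub>sumUV m n\<^esub> \<otimes>\<^bsub>sumUV m n\<^esub> \<one>\<^bsub>sumUV m n\<^esub> = \<one>\<^bsub>sumUV m n\<^esub>"
  by (simp add: sumUV_mult sumUV_one)
lemma sumUV_m_closed: "x \<in> carrier (sumUV m n) \<Longrightarrow> y \<in> carrier (sumUV m n) \<Longrightarrow> x \<otimes>\<^bsub>sumUV m n\<^esub> y \<in> carrier (sumUV m n)"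
  unfolding sumUV_carrier sumUV_mult by auto

lemma emb_one: "qf_embedding (sumUV m n) (qUV m n) A q f \<Longrightarrow> f \<one>\<^bsub>sumUV m n\<^esub> = \<one>"
  by (rule hom_one_gen[OF emb_hom sumUV_one_carrier sumUV_one_one])

lemma emb_dl_ord2:
  assumes e: "qf_embedding (sumUV m n) (qUV m n) A q f" and i: "i < 2 * (m + n)"
  shows "ord2 (f (dl i))"
proof -
  have c: "dl i \<in> carrier (sumUV m n)" by (rule dl_carrier[OF i])
  have "f (dl i) \<otimes> f (dl i) = f (dl i \<otimes>\<^bsub>sumUV m n\<^esub> dl i)" using hom_mult[OF emb_hom[OF e] c c] by simp
  also have "\<dots> = \<one>" unfolding dl_sq by (rule emb_one[OF e])
  finally show ?thesis using hom_in_carrier[OF emb_hom[OF e] c] by (simp add: ord2_def)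
qed

lemma emb_dl_q:
  assumes e: "qf_embedding (sumUV m n) (qUV m n) A q f" and i: "i < 2 * (m + n)"
  shows "int2 (f (dl i)) \<and> qb (f (dl i)) = (m \<le> i div 2)"
proof -
  have "cong2 (q (f (dl i))) (qUV m n (dl i))" by (rule emb_q[OF e dl_carrier[OF i]])
  then have "cong2 (q (f (dl i))) (of_bool (m \<le> i div 2))" unfolding qUV_dl[OF i] .
  then show ?thesis by (rule of_bool_int2)
qed

lemma emb_dl_bt:
  assumes e: "qf_embedding (sumUV m n) (qUV m n) A q f" and i: "i < 2 * (m + n)" and j: "j < 2 * (m + n)"
  shows "bt (f (dl i)) (f (dl j)) = (i \<noteq> j \<and> i div 2 = j div 2)"
proof -
  have ci: "dl i \<in> carrier (sumUV m n)" and cj: "dl j \<in> carrier (sumUV m n)"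
    using dl_carrier i j by blast+
  have c: "cong1 (bform A q (f (dl i)) (f (dl j))) (bform (sumUV m n) (qUV m n) (dl i) (dl j))"
    by (rule emb_bform[OF e ci cj sumUV_m_closed[OF ci cj]])
  show ?thesis
  proof (cases "i = j")
    case True
    then have "cong1 (bform A q (f (dl i)) (f (dl j))) (bform (sumUV m n) (qUV m n) (dl i) (dl i))" using c by simp
    then have "cong1 (bform A q (f (dl i)) (f (dl j))) 0" using cong1_trans bform_dl_same[OF i] by blast
    then show ?thesis using True by (simp add: bt_def)
  next
    case False
    note bp = bform_dl_pair[OF i j False]
    show ?thesis
    proof (cases "i div 2 = j div 2")
      case True
      then have "cong1 (bform A q (f (dl i)) (f (dl j))) (1/2)" using c bp by simp
      then show ?thesis using True False cong1_0_half by (auto simp: bt_def)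
    next
      case F2: False
      then have "cong1 (bform A q (f (dl i)) (f (dl j))) 0" using c bp by simp
      then show ?thesis using F2 by (simp add: bt_def)
    qed
  qed
qed

lemma isom_ord2: "isom h \<Longrightarrow> ord2 x \<Longrightarrow> ord2 (h x)"
proof -
  assume h: "isom h" and x: "ord2 x"
  have xc: "x \<in> carrier A" using ord2_carrier[OF x] .
  have "h x \<otimes> h x = h (x \<otimes> x)" using isom_mult[OF h xc xc] by simp
  also have "\<dots> = h \<one>" using ord2_sq[OF x] by simp
  also have "\<dots> = \<one>" using hom_one[OF isom_hom[OF h]] is_group by simp
  finally show ?thesis using isom_carrier[OF h xc] by (simp add: ord2_def)
qed

lemma isom_int2_qb: "isom h \<Longrightarrow> x \<in> carrier A \<Longrightarrow> int2 (h x) = int2 x \<and> qb (h x) = qb x"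
proof -
  assume h: "isom h" and x: "x \<in> carrier A"
  have c: "cong2 (q (h x)) (q x)" by (rule isom_q[OF h x])
  have "\<And>v. cong2 (q (h x)) v \<longleftrightarrow> cong2 (q x) v"
    using cong2_trans[OF c] cong2_trans[OF cong2_sym[OF c]] by blast
  then show ?thesis by (simp add: int2_def qb_def)
qed

end

locale twoemb = fqf +
  fixes m n :: nat and \<phi> \<psi> :: "(nat \<Rightarrow> int) \<Rightarrow> 'a"
  assumes ephi: "qf_embedding (sumUV m n) (qUV m n) A q \<phi>"
    and epsi: "qf_embedding (sumUV m n) (qUV m n) A q \<psi>"
begin

abbreviation "N \<equiv> m + n"

lemma induct_step:
  "k \<le> N \<Longrightarrow> \<exists>h. isom h \<and> (\<forall>j<2*k. h (\<phi> (dl j)) = \<psi> (dl j))"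
proof (induction k)
  case 0
  have "\<forall>j<2*0. id (\<phi> (dl j)) = \<psi> (dl j)" by simp
  then show ?case using isom_id by blast
next
  case (Suc k)
  then obtain h where h: "isom h" and hj: "\<forall>j<2*k. h (\<phi> (dl j)) = \<psi> (dl j)" by auto
  have k: "2*k < 2*N" "2*k+1 < 2*N" using Suc.prems by auto
  let ?g0 = "\<psi> (dl (2*k))" and ?g1 = "\<psi> (dl (2*k+1))"
  let ?g2 = "h (\<phi> (dl (2*k)))" and ?g3 = "h (\<phi> (dl (2*k+1)))"
  have po: "ord2 (\<phi> (dl (2*k)))" "ord2 (\<phi> (dl (2*k+1)))" using emb_dl_ord2[OF ephi] k by blast+
  have pc: "\<phi> (dl (2*k)) \<in> carrier A" "\<phi> (dl (2*k+1)) \<in> carrier A" using po ord2_carrier by blast+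
  have o: "ord2 ?g0" "ord2 ?g1" "ord2 ?g2" "ord2 ?g3"
    using emb_dl_ord2[OF epsi] k isom_ord2[OF h] po by blast+
  have qq: "int2 ?g0 \<and> qb ?g0 = (m \<le> k)" "int2 ?g1 \<and> qb ?g1 = (m \<le> k)"
    "int2 ?g2 \<and> qb ?g2 = (m \<le> k)" "int2 ?g3 \<and> qb ?g3 = (m \<le> k)"
    using emb_dl_q[OF epsi k(1)] emb_dl_q[OF epsi k(2)] emb_dl_q[OF ephi k(1)] emb_dl_q[OF ephi k(2)]
      isom_int2_qb[OF h pc(1)] isom_int2_qb[OF h pc(2)] by auto
  interpret four A q ?g0 ?g1 ?g2 ?g3
    using o qq by unfold_locales auto
  have b01: "bt ?g0 ?g1" using emb_dl_bt[OF epsi k] by simp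
  have b23: "bt ?g2 ?g3" using emb_dl_bt[OF ephi k] isom_bt[OF h pc] by simp
  obtain g where g: "isom g" and g2: "g ?g2 = ?g0" and g3: "g ?g3 = ?g1"
    and gfix: "\<forall>x\<in>carrier A. \<not> bt x ?g0 \<and> \<not> bt x ?g1 \<and> \<not> bt x ?g2 \<and> \<not> bt x ?g3 \<longrightarrow> g x = x"
    using plane[OF _ _ _ b01 b23] qq by auto
  show ?case
  proof (intro exI conjI allI impI)
    show "isom (g \<circ> h)" by (rule isom_comp[OF g h])
    fix j assume j: "j < 2 * Suc k"
    show "(g \<circ> h) (\<phi> (dl j)) = \<psi> (dl j)"
    proof (cases "j < 2*k")
      case True
      have jN: "j < 2*N" using True k by simp
      have pj: "\<phi> (dl j) \<in> carrier A" using emb_dl_ord2[OF ephi jN] ord2_carrier by blast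
      have hj': "h (\<phi> (dl j)) = \<psi> (dl j)" using hj True by blast
      have dj: "j div 2 \<noteq> k" using True by auto
      have "\<not> bt (\<psi> (dl j)) ?g0" "\<not> bt (\<psi> (dl j)) ?g1"
        using emb_dl_bt[OF epsi jN k(1)] emb_dl_bt[OF epsi jN k(2)] dj by auto
      moreover have "\<not> bt (\<psi> (dl j)) ?g2" "\<not> bt (\<psi> (dl j)) ?g3"
        using emb_dl_bt[OF ephi jN k(1)] emb_dl_bt[OF ephi jN k(2)] dj
          isom_bt[OF h pj pc(1)] isom_bt[OF h pj pc(2)] hj' by auto
      moreover have "\<psi> (dl j) \<in> carrier A" using emb_dl_ord2[OF epsi jN] ord2_carrier by blast
      ultimately show ?thesis using gfix hj' by simp
    next
      case False
      then have "j = 2*k \<or> j = 2*k+1" using j by auto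
      then show ?thesis using g2 g3 by auto
    qed
  qed
qed

end



definition tr :: "nat \<Rightarrow> (nat \<Rightarrow> int) \<Rightarrow> nat \<Rightarrow> int" where
  "tr M x = (\<lambda>i. if i < M then x i else 0)"

lemma tr_carrier: "x \<in> carrier (sumUV m n) \<Longrightarrow> tr M x \<in> carrier (sumUV m n)"
  by (auto simp: sumUV_carrier tr_def)

lemma tr_0: "tr 0 x = \<one>\<^bsub>sumUV m n\<^esub>"
  by (simp add: tr_def sumUV_one)

lemma tr_full: "x \<in> carrier (sumUV m n) \<Longrightarrow> tr (2 * (m + n)) x = x"
  by (auto simp: tr_def sumUV_carrier)

lemma tr_Suc1: "x \<in> carrier (sumUV m n) \<Longrightarrow> x M = 1 \<Longrightarrow> tr (Suc M) x = tr M x \<otimes>\<^bsub>sumUV m n\<^esub> dl M"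
proof -
  assume x: "x \<in> carrier (sumUV m n)" and xM: "x M = 1"
  have "\<And>i. x i \<in> {0, 1}" using x by (simp add: sumUV_carrier)
  then have m2: "x i mod 2 = x i" for i
  proof -
    have "x i = 0 \<or> x i = 1" using \<open>\<And>i. x i \<in> {0, 1}\<close>[of i] by simp
    then show ?thesis by auto
  qed
  show ?thesis using xM m2 by (auto simp: tr_def sumUV_mult dl_def fun_eq_iff)
qed

lemma tr_Suc0: "x M \<noteq> 1 \<Longrightarrow> x \<in> carrier (sumUV m n) \<Longrightarrow> tr (Suc M) x = tr M x"
proof -
  assume xM: "x M \<noteq> 1" and x: "x \<in> carrier (sumUV m n)"
  have "x M \<in> {0, 1}" using x by (simp add: sumUV_carrier)
  then have "x M = 0" using xM by auto
  then show ?thesis by (auto simp: tr_def fun_eq_iff less_Suc_eq)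
qed

lemma M_bound: assumes x: "x \<in> carrier (sumUV m n)" and xM: "x M = 1" shows "M < 2 * (m + n)"
proof (rule ccontr)
  assume "\<not> M < 2 * (m + n)"
  then have "x M = 0" using x by (simp add: sumUV_carrier)
  then show False using xM by simp
qed

context twoemb
begin

lemma agree:
  assumes F1: "F1 \<in> hom (sumUV m n) A" and F2: "F2 \<in> hom (sumUV m n) A"
    and d: "\<And>j. j < 2 * N \<Longrightarrow> F1 (dl j) = F2 (dl j)"
    and x: "x \<in> carrier (sumUV m n)"
  shows "F1 x = F2 x"
proof -
  have "F1 (tr M x) = F2 (tr M x)" for M
  proof (induction M)
    case 0
    show ?case unfolding tr_0[of x m n] using hom_one_gen[OF F1 sumUV_one_carrier sumUV_one_one]
        hom_one_gen[OF F2 sumUV_one_carrier sumUV_one_one] by simp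
  next
    case (Suc M)
    show ?case
    proof (cases "x M = 1")
      case True
      have Mb: "M < 2 * N" using M_bound[OF x True] .
      have c: "tr M x \<in> carrier (sumUV m n)" "dl M \<in> carrier (sumUV m n)"
        using tr_carrier[OF x] dl_carrier[OF Mb] by auto
      show ?thesis unfolding tr_Suc1[OF x True] hom_mult[OF F1 c] hom_mult[OF F2 c] Suc.IH d[OF Mb] ..
    next
      case False
      show ?thesis unfolding tr_Suc0[OF False x] by (rule Suc.IH)
    qed
  qed
  from this[of "2 * N"] show ?thesis unfolding tr_full[OF x] .
qed

lemma full: "\<exists>h. isom h \<and> (\<forall>x\<in>carrier (sumUV m n). h (\<phi> x) = \<psi> x)"
proof -
  obtain h where h: "isom h" and hj: "\<forall>j<2*N. h (\<phi> (dl j)) = \<psi> (dl j)"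
    using induct_step[of N] by auto
  have F1: "(\<lambda>x. h (\<phi> x)) \<in> hom (sumUV m n) A"
  proof (rule homI)
    fix x assume "x \<in> carrier (sumUV m n)"
    then show "h (\<phi> x) \<in> carrier A" using isom_carrier[OF h] hom_in_carrier[OF emb_hom[OF ephi]] by blast
  next
    fix x y assume xy: "x \<in> carrier (sumUV m n)" "y \<in> carrier (sumUV m n)"
    then show "h (\<phi> (x \<otimes>\<^bsub>sumUV m n\<^esub> y)) = h (\<phi> x) \<otimes> h (\<phi> y)"
      using hom_mult[OF emb_hom[OF ephi] xy] isom_mult[OF h] hom_in_carrier[OF emb_hom[OF ephi]] by simp
  qed
  show ?thesis
    using agree[OF F1 emb_hom[OF epsi]] hj h by blast
qed

lemma main:
  "qf_isometric (A\<lparr>carrier := orth_compl A q (\<phi> ` carrier (sumUV m n))\<rparr>) q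
                (A\<lparr>carrier := orth_compl A q (\<psi> ` carrier (sumUV m n))\<rparr>) q"
proof -
  obtain h where h: "isom h" and hp: "\<forall>x\<in>carrier (sumUV m n). h (\<phi> x) = \<psi> x"
    using full by blast
  let ?O1 = "orth_compl A q (\<phi> ` carrier (sumUV m n))"
  let ?O2 = "orth_compl A q (\<psi> ` carrier (sumUV m n))"
  have phic: "\<And>w. w \<in> carrier (sumUV m n) \<Longrightarrow> \<phi> w \<in> carrier A"
    using hom_in_carrier[OF emb_hom[OF ephi]] .
  have z1: "cong1 (bform A q (h x) (\<psi> w)) 0 \<longleftrightarrow> cong1 (bform A q x (\<phi> w)) 0"
    if x: "x \<in> carrier A" and w: "w \<in> carrier (sumUV m n)" for x w
  proof -
    have c: "cong1 (bform A q (h x) (h (\<phi> w))) (bform A q x (\<phi> w))" by (rule isom_bform[OF h x phic[OF w]])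
    then have c': "cong1 (bform A q (h x) (\<psi> w)) (bform A q x (\<phi> w))" using hp w by simp
    show ?thesis using cong1_trans[OF c'] cong1_trans[OF cong1_sym[OF c']] by blast
  qed
  have O12: "x \<in> ?O1 \<longleftrightarrow> h x \<in> ?O2" if x: "x \<in> carrier A" for x
    using z1[OF x] isom_carrier[OF h x] x by (auto simp: orth_compl_def)
  have sub1: "?O1 \<subseteq> carrier A" by (auto simp: orth_compl_def)
  have bij: "bij_betw h (carrier A) (carrier A)" by (rule isom_bij[OF h])
  show ?thesis
    unfolding qf_isometric_def
  proof (intro exI conjI ballI)
    show "h \<in> hom (A\<lparr>carrier := ?O1\<rparr>) (A\<lparr>carrier := ?O2\<rparr>)"
    proof (rule homI)
      fix x assume "x \<in> carrier (A\<lparr>carrier := ?O1\<rparr>)"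
      then have "x \<in> ?O1" by simp
      then show "h x \<in> carrier (A\<lparr>carrier := ?O2\<rparr>)" using O12 sub1 by auto
    next
      fix x y assume "x \<in> carrier (A\<lparr>carrier := ?O1\<rparr>)" "y \<in> carrier (A\<lparr>carrier := ?O1\<rparr>)"
      then have "x \<in> carrier A" "y \<in> carrier A" using sub1 by auto
      then show "h (x \<otimes>\<^bsub>A\<lparr>carrier := ?O1\<rparr>\<^esub> y) = h x \<otimes>\<^bsub>A\<lparr>carrier := ?O2\<rparr>\<^esub> h y"
        using isom_mult[OF h] by simp
    qed
    show "bij_betw h (carrier (A\<lparr>carrier := ?O1\<rparr>)) (carrier (A\<lparr>carrier := ?O2\<rparr>))"
    proof -
      have inj: "inj_on h ?O1" using bij sub1 by (auto simp: bij_betw_def intro: inj_on_subset)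
      have "h ` ?O1 = ?O2"
      proof
        show "h ` ?O1 \<subseteq> ?O2" using O12 sub1 by auto
        show "?O2 \<subseteq> h ` ?O1"
        proof
          fix y assume y: "y \<in> ?O2"
          then have yc: "y \<in> carrier A" by (simp add: orth_compl_def)
          then obtain x where x: "x \<in> carrier A" "y = h x" using bij by (auto simp: bij_betw_def)
          then have "x \<in> ?O1" using O12 y by simp
          then show "y \<in> h ` ?O1" using x by blast
        qed
      qed
      then show ?thesis using inj by (simp add: bij_betw_def)
    qed
    fix x assume "x \<in> carrier (A\<lparr>carrier := ?O1\<rparr>)"
    then have "x \<in> carrier A" using sub1 by auto
    then show "cong2 (q (h x)) (q x)" by (rule isom_q[OF h])
  qed
qed

end

lemma fqf_intro: "finite_quadratic_form A q \<Longrightarrow> fqf A q"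
  unfolding finite_quadratic_form_def fqf_def fqf_axioms_def by blast



theorem lemma7p6:
  fixes A :: "('a, 'b) monoid_scheme" and qA :: "'a \<Rightarrow> rat"
    and m n :: nat and \<phi> \<psi> :: "(nat \<Rightarrow> int) \<Rightarrow> 'a"
  assumes "finite_quadratic_form A qA"
    and "nondegenerate A qA"
    and "qf_embedding (sumUV m n) (qUV m n) A qA \<phi>"
    and "qf_embedding (sumUV m n) (qUV m n) A qA \<psi>"
  shows "qf_isometric
           (A\<lparr>carrier := orth_compl A qA (\<phi> ` carrier (sumUV m n))\<rparr>) qA
           (A\<lparr>carrier := orth_compl A qA (\<psi> ` carrier (sumUV m n))\<rparr>) qA"
proof -
  interpret fqf A qA using fqf_intro[OF assms(1)] .
  interpret twoemb A qA m n \<phi> \<psi>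
    by unfold_locales (rule assms(3), rule assms(4))
  show ?thesis by (rule main)
qed

end
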